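(* Let $\Omega\subset\mathbb{R}^n$ be a non-empty, bounded, connected, open set with closure $\overline{\Omega}$. Let $J\in C(\overline{\Omega}\times\overline{\Omega})$, let $S\in C^\infty(\mathbb{R})$ have bounded $k$th derivative for every $k\in\{0,1,2,\dots\}$, and let $\tau\in C(\overline{\Omega}\times\overline{\Omega})$ be non-negative and not identically zero. Put $h:=\sup_{\overline{\Omega}\times\overline{\Omega}}\tau$, $Y:=C(\overline{\Omega})$ and $X:=C([-h,0];Y)$ (supremum norms), and define $G:X\to Y$ by $G(\phi)(\mathbf{r})=\int_{\overline{\Omega}}J(\mathbf{r},\mathbf{r}')S(\phi(-\tau(\mathbf{r},\mathbf{r}'),\mathbf{r}'))\,d\mathbf{r}'$. Then $G$ is Fréchet differentiable, and its derivative $DG(\phi)\in\mathcal{L}(X,Y)$ at $\phi\in X$ is given by $$(DG(\phi)\psi)(\mathbf{r})=\int_{\overline{\Omega}}J(\mathbf{r},\mathbf{r}')\,S'\big(\phi(-\tau(\mathbf{r},\mathbf{r}'),\mathbf{r}')\big)\,\psi(-\tau(\mathbf{r},\mathbf{r}'),\mathbf{r}')\,d\mathbf{r}'$$ for all $\psi\in X$ and $\mathbf{r}\in\overline{\Omega}$.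
   Context: For $\phi\in X$ write $\phi(t,\mathbf{r}):=\phi(t)(\mathbf{r})$. $\mathcal{L}(X,Y)$ denotes the bounded linear operators from $X$ to $Y$. *)

theory Defs
  imports "HOL-Analysis.Analysis"
begin

definition supn :: "'b set \<Rightarrow> ('b \<Rightarrow> real) \<Rightarrow> real" where
  "supn K f = (SUP x\<in>K. \<bar>f x\<bar>)"

text \<open>The space Y = C(K) (functions are only relevant on K).\<close>
definition CY :: "'b::topological_space set \<Rightarrow> ('b \<Rightarrow> real) set" where
  "CY K = {f. continuous_on K f}"

definition CX :: "real \<Rightarrow> 'b::topological_space set \<Rightarrow> (real \<Rightarrow> 'b \<Rightarrow> real) set" where
  "CX h K = {\<phi>. (\<forall>t\<in>{-h..0}. \<phi> t \<in> CY K) \<and>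
     (\<forall>t0\<in>{-h..0}. \<forall>e>0. \<exists>d>0. \<forall>t\<in>{-h..0}. \<bar>t - t0\<bar> < d \<longrightarrow>
        supn K (\<lambda>r. \<phi> t r - \<phi> t0 r) < e)}"

definition normX :: "real \<Rightarrow> 'b set \<Rightarrow> (real \<Rightarrow> 'b \<Rightarrow> real) \<Rightarrow> real" where
  "normX h K \<phi> = (SUP t\<in>{-h..0}. supn K (\<phi> t))"

definition bounded_linear_XY ::
  "real \<Rightarrow> 'b::topological_space set \<Rightarrow> ((real \<Rightarrow> 'b \<Rightarrow> real) \<Rightarrow> 'b \<Rightarrow> real) \<Rightarrow> bool" where
  "bounded_linear_XY h K L \<longleftrightarrow>
     (\<forall>\<psi>\<in>CX h K. L \<psi> \<in> CY K) \<and>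
     (\<forall>\<psi>1\<in>CX h K. \<forall>\<psi>2\<in>CX h K. \<forall>c::real. \<forall>r\<in>K.
        L (\<lambda>t x. c * \<psi>1 t x + \<psi>2 t x) r = c * L \<psi>1 r + L \<psi>2 r) \<and>
     (\<exists>C. \<forall>\<psi>\<in>CX h K. supn K (L \<psi>) \<le> C * normX h K \<psi>)"

definition frechet_deriv_XY ::
  "real \<Rightarrow> 'b::topological_space set \<Rightarrow> ((real \<Rightarrow> 'b \<Rightarrow> real) \<Rightarrow> 'b \<Rightarrow> real)
     \<Rightarrow> ((real \<Rightarrow> 'b \<Rightarrow> real) \<Rightarrow> 'b \<Rightarrow> real) \<Rightarrow> (real \<Rightarrow> 'b \<Rightarrow> real) \<Rightarrow> bool" where
  "frechet_deriv_XY h K G L \<phi> \<longleftrightarrow>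
     bounded_linear_XY h K L \<and>
     (\<forall>e>0. \<exists>d>0. \<forall>\<psi>\<in>CX h K. 0 < normX h K \<psi> \<and> normX h K \<psi> < d \<longrightarrow>
        supn K (\<lambda>r. G (\<lambda>t x. \<phi> t x + \<psi> t x) r - G \<phi> r - L \<psi> r) \<le> e * normX h K \<psi>)"

definition nfG :: "('b::euclidean_space \<Rightarrow> 'b \<Rightarrow> real) \<Rightarrow> (real \<Rightarrow> real) \<Rightarrow> ('b \<Rightarrow> 'b \<Rightarrow> real)
     \<Rightarrow> 'b set \<Rightarrow> (real \<Rightarrow> 'b \<Rightarrow> real) \<Rightarrow> 'b \<Rightarrow> real" where
  "nfG J S \<tau> K \<phi> r = integral K (\<lambda>r'. J r r' * S (\<phi> (- \<tau> r r') r'))"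

definition nfDG :: "('b::euclidean_space \<Rightarrow> 'b \<Rightarrow> real) \<Rightarrow> (real \<Rightarrow> real) \<Rightarrow> ('b \<Rightarrow> 'b \<Rightarrow> real)
     \<Rightarrow> 'b set \<Rightarrow> (real \<Rightarrow> 'b \<Rightarrow> real) \<Rightarrow> (real \<Rightarrow> 'b \<Rightarrow> real) \<Rightarrow> 'b \<Rightarrow> real" where
  "nfDG J S \<tau> K \<phi> \<psi> r =
     integral K (\<lambda>r'. J r r' * deriv S (\<phi> (- \<tau> r r') r') * \<psi> (- \<tau> r r') r')"

end

theory Submission
  imports Defs
begin
lemma cont_integrable:
  fixes f :: "'a::euclidean_space \<Rightarrow> real"
  assumes "compact S" "continuous_on S f" shows "f integrable_on S"
proof -
  have "(\<lambda>x. indicator S x *\<^sub>R f x) integrable_on UNIV"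
    by (rule integrable_on_lborel[OF borel_integrable_compact[OF assms]])
  moreover have "(\<lambda>x. indicator S x *\<^sub>R f x) = (\<lambda>x. if x \<in> S then f x else 0)"
    by (auto simp: indicator_def fun_eq_iff)
  ultimately show ?thesis by (simp add: integrable_restrict_UNIV)
qed

lemma int_bound:
  fixes f :: "'a::euclidean_space \<Rightarrow> real"
  assumes "compact S" "f integrable_on S" "\<And>x. x \<in> S \<Longrightarrow> \<bar>f x\<bar> \<le> B"
  shows "\<bar>integral S f\<bar> \<le> B * integral S (\<lambda>_. 1)"
proof -
  have c: "(\<lambda>_. B) integrable_on S" by (rule cont_integrable[OF assms(1)]) simp
  have "norm (integral S f) \<le> integral S (\<lambda>_. B)"
    by (rule integral_norm_bound_integral[OF assms(2) c]) (use assms(3) in auto)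
  also have "integral S (\<lambda>_. B) = B * integral S (\<lambda>_. 1)"
    using integral_mult_right[of S B "\<lambda>_. 1::real"] by simp
  finally show ?thesis by simp
qed

lemma int_nonneg1:
  fixes S :: "'a::euclidean_space set"
  assumes "compact S" shows "0 \<le> integral S (\<lambda>_. 1::real)"
  by (rule integral_nonneg) (auto intro: cont_integrable[OF assms])

lemma sup_ge:
  assumes "compact K" "continuous_on K f" "x \<in> K"
  shows "\<bar>f x\<bar> \<le> supn K f"
proof -
  have "bounded (f ` K)" by (rule compact_imp_bounded[OF compact_continuous_image[OF assms(2,1)]])
  then obtain B where B: "\<forall>y\<in>f ` K. norm y \<le> B" by (auto simp: bounded_iff)
  have "bdd_above ((\<lambda>x. \<bar>f x\<bar>) ` K)" using B by (intro bdd_aboveI2[of _ _ B]) auto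
  then show ?thesis unfolding supn_def by (rule cSUP_upper[OF assms(3)])
qed

lemma sup_le:
  assumes "K \<noteq> {}" "\<And>x. x \<in> K \<Longrightarrow> \<bar>f x\<bar> \<le> B"
  shows "supn K f \<le> B"
  unfolding supn_def using assms by (intro cSUP_least) auto

lemma CX_joint:
  fixes K :: "'a::euclidean_space set"
  assumes "\<psi> \<in> CX h K" "compact K"
  shows "continuous_on ({-h..0} \<times> K) (\<lambda>p. \<psi> (fst p) (snd p))"
  unfolding continuous_on_iff
proof (intro ballI allI impI)
  fix p and e :: real assume p: "p \<in> {-h..0} \<times> K" and e: "0 < e"
  obtain t0 x0 where p0: "p = (t0,x0)" "t0 \<in> {-h..0}" "x0 \<in> K" using p by auto
  from assms(1) have cy: "\<forall>t\<in>{-h..0}. continuous_on K (\<psi> t)"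
    and uc: "\<forall>t0\<in>{-h..0}. \<forall>e>0. \<exists>d>0. \<forall>t\<in>{-h..0}. \<bar>t - t0\<bar> < d \<longrightarrow>
        supn K (\<lambda>r. \<psi> t r - \<psi> t0 r) < e"
    unfolding CX_def CY_def by auto
  obtain d1 where d1: "d1>0" "\<forall>t\<in>{-h..0}. \<bar>t - t0\<bar> < d1 \<longrightarrow> supn K (\<lambda>r. \<psi> t r - \<psi> t0 r) < e/2"
    using uc p0(2) e by (meson half_gt_zero)
  obtain d2 where d2: "d2>0" "\<forall>x\<in>K. dist x x0 < d2 \<longrightarrow> dist (\<psi> t0 x) (\<psi> t0 x0) < e/2"
    using cy p0 e unfolding continuous_on_iff by (meson half_gt_zero)
  show "\<exists>d>0. \<forall>x'\<in>{-h..0}\<times>K. dist x' p < d \<longrightarrow> dist (\<psi> (fst x') (snd x')) (\<psi> (fst p) (snd p)) < e"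
  proof (intro exI[of _ "min d1 d2"] conjI ballI impI)
    show "min d1 d2 > 0" using d1 d2 by simp
    fix q assume q: "q \<in> {-h..0}\<times>K" "dist q p < min d1 d2"
    obtain t x where qq: "q = (t,x)" "t\<in>{-h..0}" "x\<in>K" using q by auto
    have "dist t t0 < d1" using dist_fst_le[of q p] q qq p0 by simp
    then have 1: "supn K (\<lambda>r. \<psi> t r - \<psi> t0 r) < e/2" using d1 qq by (simp add: dist_real_def)
    have "dist x x0 < d2" using dist_snd_le[of q p] q qq p0 by simp
    then have 2: "\<bar>\<psi> t0 x - \<psi> t0 x0\<bar> < e/2" using d2 qq by (simp add: dist_real_def)
    have "\<bar>\<psi> t x - \<psi> t0 x\<bar> \<le> supn K (\<lambda>r. \<psi> t r - \<psi> t0 r)"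
      using cy qq p0 by (intro sup_ge[OF assms(2)]) (auto intro: continuous_on_diff)
    with 1 2 show "dist (\<psi> (fst q) (snd q)) (\<psi> (fst p) (snd p)) < e"
      using qq p0 abs_triangle_ineq[of "\<psi> t x - \<psi> t0 x" "\<psi> t0 x - \<psi> t0 x0"]
      by (simp add: dist_real_def)
  qed
qed

lemma normX_ge:
  fixes K :: "'a::euclidean_space set"
  assumes "\<psi> \<in> CX h K" "compact K" "K \<noteq> {}" "t \<in> {-h..0}" "x \<in> K"
  shows "\<bar>\<psi> t x\<bar> \<le> normX h K \<psi>"
proof -
  have cy: "\<forall>t\<in>{-h..0}. continuous_on K (\<psi> t)" using assms(1) unfolding CX_def CY_def by auto
  have "compact ({-h..0} \<times> K)" using assms(2) by (simp add: compact_Times)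
  then have "bounded ((\<lambda>p. \<psi> (fst p) (snd p)) ` ({-h..0} \<times> K))"
    by (intro compact_imp_bounded compact_continuous_image CX_joint assms)
  then obtain B where B: "\<forall>y\<in>(\<lambda>p. \<psi> (fst p) (snd p)) ` ({-h..0} \<times> K). norm y \<le> B"
    by (auto simp: bounded_iff)
  have "\<forall>t\<in>{-h..0}. supn K (\<psi> t) \<le> B"
  proof
    fix t assume t: "t \<in> {-h..0}"
    show "supn K (\<psi> t) \<le> B" using B t by (intro sup_le[OF assms(3)]) auto
  qed
  then have bdd: "bdd_above ((\<lambda>t. supn K (\<psi> t)) ` {-h..0})" by (intro bdd_aboveI2[of _ _ B]) auto
  have "\<bar>\<psi> t x\<bar> \<le> supn K (\<psi> t)" using cy assms by (intro sup_ge) auto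
  also have "\<dots> \<le> normX h K \<psi>" unfolding normX_def by (rule cSUP_upper[OF assms(4) bdd])
  finally show ?thesis .
qed

lemma param_cont:
  fixes F :: "'a::euclidean_space \<times> 'a \<Rightarrow> real"
  assumes "compact K" "continuous_on (K \<times> K) F"
  shows "continuous_on K (\<lambda>r. integral K (\<lambda>r'. F (r, r')))"
  unfolding continuous_on_iff
proof (intro ballI allI impI)
  fix r0 and e :: real assume r0: "r0 \<in> K" and e: "0 < e"
  define \<mu> where "\<mu> = integral K (\<lambda>_. 1::real)"
  have mu: "0 \<le> \<mu>" unfolding \<mu>_def by (rule int_nonneg1[OF assms(1)])
  have uc: "uniformly_continuous_on (K \<times> K) F"
    by (intro compact_uniformly_continuous assms compact_Times)
  obtain d where d: "d > 0" "\<forall>x\<in>K\<times>K. \<forall>x'\<in>K\<times>K. dist x' x < d \<longrightarrow> dist (F x') (F x) < e/(2*(\<mu>+1))"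
    using uc[unfolded uniformly_continuous_on_def, rule_format, of "e/(2*(\<mu>+1))"] e mu by auto
  have int: "(\<lambda>r'. F (r, r')) integrable_on K" if "r \<in> K" for r
    using that by (intro cont_integrable assms continuous_on_compose2[OF assms(2)])
       (auto intro!: continuous_intros)
  show "\<exists>d>0. \<forall>r\<in>K. dist r r0 < d \<longrightarrow> dist (integral K (\<lambda>r'. F (r, r'))) (integral K (\<lambda>r'. F (r0, r'))) < e"
  proof (intro exI[of _ d] conjI ballI impI)
    show "d > 0" by (rule d)
    fix r assume r: "r \<in> K" "dist r r0 < d"
    have "\<bar>integral K (\<lambda>r'. F (r, r') - F (r0, r'))\<bar> \<le> e/(2*(\<mu>+1)) * integral K (\<lambda>_. 1)"
    proof (rule int_bound[OF assms(1)])
      show "(\<lambda>r'. F (r, r') - F (r0, r')) integrable_on K" using int r r0 by (intro integrable_diff) auto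
      fix x assume x: "x \<in> K"
      have "dist (r, x) (r0, x) < d" using r by (simp add: dist_Pair_Pair)
      then show "\<bar>F (r, x) - F (r0, x)\<bar> \<le> e/(2*(\<mu>+1))" using d r r0 x
        by (auto simp: dist_real_def intro: less_imp_le)
    qed
    also have "\<dots> < e" using e mu by (simp add: \<mu>_def[symmetric] field_simps) (smt (verit) mult_nonneg_nonneg)
    finally show "dist (integral K (\<lambda>r'. F (r, r'))) (integral K (\<lambda>r'. F (r0, r'))) < e"
      using int r r0 by (simp add: dist_real_def integral_diff)
  qed
qed

lemma pint:
  fixes F :: "'a::euclidean_space \<times> 'a \<Rightarrow> real"
  assumes "compact K" "continuous_on (K \<times> K) F" "r \<in> K"
  shows "(\<lambda>r'. F (r, r')) integrable_on K"
  using assms by (intro cont_integrable continuous_on_compose2[OF assms(2)]) (auto intro!: continuous_intros)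

lemma abs3:
  fixes x y z :: real
  assumes "\<bar>x\<bar> \<le> A" "\<bar>y\<bar> \<le> B" "\<bar>z\<bar> \<le> C"
  shows "\<bar>x * y * z\<bar> \<le> A * B * C"
proof -
  have "\<bar>x * y\<bar> \<le> A * B" unfolding abs_mult
    by (rule mult_mono) (use assms in auto)
  then show ?thesis unfolding abs_mult[of "x*y"]
    by (rule mult_mono) (use assms in \<open>auto intro: order_trans[OF abs_ge_zero]\<close>)
qed

lemma lip:
  fixes f f' :: "real \<Rightarrow> real"
  assumes "\<And>x. DERIV f x :> f' x" "\<And>x. \<bar>f' x\<bar> \<le> M"
  shows "\<bar>f z - f a\<bar> \<le> M * \<bar>z - a\<bar>"
proof (cases z a rule: linorder_cases)
  case less
  from MVT2[OF less assms(1)] obtain w where "f a - f z = (a - z) * f' w" by blast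
  then show ?thesis using assms(2)[of w] less by (simp add: abs_mult abs_minus_commute mult.commute mult_right_mono)
next
  case greater
  from MVT2[OF greater assms(1)] obtain w where "f z - f a = (z - a) * f' w" by blast
  then show ?thesis using assms(2)[of w] greater by (simp add: abs_mult mult.commute mult_right_mono)
qed simp

lemma taylor2:
  fixes S S' S'' :: "real \<Rightarrow> real"
  assumes d1: "\<And>x. DERIV S x :> S' x" and d2: "\<And>x. DERIV S' x :> S'' x" and b: "\<And>x. \<bar>S'' x\<bar> \<le> M"
  shows "\<bar>S (a+b) - S a - S' a * b\<bar> \<le> M * b^2"
proof -
  have L: "\<bar>S' z - S' a\<bar> \<le> M * \<bar>z - a\<bar>" for z by (rule lip[OF d2 b])
  define g where "g x = S x - S' a * x" for x
  have dg: "DERIV g x :> S' x - S' a" for x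
    unfolding g_def by (auto intro!: derivative_eq_intros d1)
  have eq: "S (a+b) - S a - S' a * b = g (a+b) - g a" unfolding g_def by (simp add: algebra_simps)
  have M0: "0 \<le> M" using b[of 0] by simp
  show ?thesis
  proof (cases b "0::real" rule: linorder_cases)
    case less
    then have ab: "a + b < a" by simp
    from MVT2[OF ab dg] obtain w where w: "a + b < w" "w < a" "g a - g (a+b) = (a - (a+b)) * (S' w - S' a)" by blast
    have "\<bar>S' w - S' a\<bar> \<le> M * \<bar>b\<bar>" using L[of w] w M0 by (smt (verit) mult_left_mono)
    then have "\<bar>g a - g (a+b)\<bar> \<le> \<bar>b\<bar> * (M * \<bar>b\<bar>)" using w(3) by (simp add: abs_mult mult_left_mono)
    then show ?thesis unfolding eq by (simp add: power2_eq_square abs_minus_commute algebra_simps abs_mult_self_eq)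
  next
    case greater
    then have ab: "a < a + b" by simp
    from MVT2[OF ab dg] obtain w where w: "a < w" "w < a + b" "g (a+b) - g a = (a + b - a) * (S' w - S' a)" by blast
    have "\<bar>S' w - S' a\<bar> \<le> M * \<bar>b\<bar>" using L[of w] w M0 by (smt (verit) mult_left_mono)
    then have "\<bar>g (a+b) - g a\<bar> \<le> \<bar>b\<bar> * (M * \<bar>b\<bar>)" using w(3) by (simp add: abs_mult mult_left_mono)
    then show ?thesis unfolding eq by (simp add: power2_eq_square algebra_simps abs_mult_self_eq)
  qed simp
qed

theorem lemma2p10:
  fixes \<Omega> :: "(real ^ 'n) set"
    and J \<tau> :: "real ^ 'n \<Rightarrow> real ^ 'n \<Rightarrow> real"
    and S :: "real \<Rightarrow> real"
  assumes "\<Omega> \<noteq> {}" and "bounded \<Omega>" and "connected \<Omega>" and "open \<Omega>"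
    and "continuous_on (closure \<Omega> \<times> closure \<Omega>) (\<lambda>(r, r'). J r r')"
    and "\<forall>k x. ((deriv ^^ k) S) differentiable (at x)"
    and "\<forall>k. bounded (range ((deriv ^^ k) S))"
    and "continuous_on (closure \<Omega> \<times> closure \<Omega>) (\<lambda>(r, r'). \<tau> r r')"
    and "\<forall>r\<in>closure \<Omega>. \<forall>r'\<in>closure \<Omega>. 0 \<le> \<tau> r r'"
    and "\<exists>r\<in>closure \<Omega>. \<exists>r'\<in>closure \<Omega>. \<tau> r r' \<noteq> 0"
    and "h = (SUP p\<in>closure \<Omega> \<times> closure \<Omega>. \<tau> (fst p) (snd p))"
  shows "(\<forall>\<phi>\<in>CX h (closure \<Omega>). nfG J S \<tau> (closure \<Omega>) \<phi> \<in> CY (closure \<Omega>)) \<and>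
         (\<forall>\<phi>\<in>CX h (closure \<Omega>).
            frechet_deriv_XY h (closure \<Omega>) (nfG J S \<tau> (closure \<Omega>))
              (nfDG J S \<tau> (closure \<Omega>) \<phi>) \<phi>)"
proof -
  define K where "K = closure \<Omega>"
  have K: "compact K" unfolding K_def using assms(2) by (simp add: compact_closure)
  have Kne: "K \<noteq> {}" unfolding K_def using assms(1) by simp
  have tc: "continuous_on (K \<times> K) (\<lambda>q. \<tau> (fst q) (snd q))"
    using assms(8) unfolding K_def by (simp add: case_prod_beta')
  have jc: "continuous_on (K \<times> K) (\<lambda>q. J (fst q) (snd q))"
    using assms(5) unfolding K_def by (simp add: case_prod_beta')
  have KK: "compact (K \<times> K)" using K by (simp add: compact_Times)
  have "bounded ((\<lambda>q. \<tau> (fst q) (snd q)) ` (K \<times> K))"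
    by (intro compact_imp_bounded compact_continuous_image tc KK)
  then obtain B where B: "\<forall>y\<in>(\<lambda>q. \<tau> (fst q) (snd q)) ` (K \<times> K). norm y \<le> B"
    by (auto simp: bounded_iff)
  have bddt: "bdd_above ((\<lambda>q. \<tau> (fst q) (snd q)) ` (K \<times> K))"
    using B by (intro bdd_aboveI2[of _ _ B]) (auto simp: abs_le_iff)
  have tle: "\<tau> r r' \<le> h" if "r \<in> K" "r' \<in> K" for r r'
    using cSUP_upper[OF _ bddt, of "(r, r')"] that assms(11) unfolding K_def by simp
  have tge: "0 \<le> \<tau> r r'" if "r \<in> K" "r' \<in> K" for r r'
    using assms(9) that unfolding K_def by auto
  have trange: "- \<tau> r r' \<in> {-h..0}" if "r \<in> K" "r' \<in> K" for r r'
    using tle[OF that] tge[OF that] by simp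
  have "bounded ((\<lambda>q. J (fst q) (snd q)) ` (K \<times> K))"
    by (intro compact_imp_bounded compact_continuous_image jc KK)
  then obtain MJ where MJ: "MJ > 0" "\<forall>y\<in>(\<lambda>q. J (fst q) (snd q)) ` (K \<times> K). norm y \<le> MJ"
    by (auto simp: bounded_pos)
  have Jb: "\<bar>J r r'\<bar> \<le> MJ" if "r \<in> K" "r' \<in> K" for r r' using MJ(2) that by force
  have "bounded (range (deriv S))" using assms(7)[rule_format, of 1] by simp
  then obtain M1 where M1: "M1 > 0" "\<forall>y\<in>range (deriv S). norm y \<le> M1" by (auto simp: bounded_pos)
  have S1b: "\<bar>deriv S x\<bar> \<le> M1" for x using M1(2) by auto
  have "bounded (range (deriv (deriv S)))" using assms(7)[rule_format, of 2] by (simp add: numeral_2_eq_2)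
  then obtain M2 where M2: "M2 > 0" "\<forall>y\<in>range (deriv (deriv S)). norm y \<le> M2" by (auto simp: bounded_pos)
  have S2b: "\<bar>deriv (deriv S) x\<bar> \<le> M2" for x using M2(2) by auto
  have dS: "DERIV S x :> deriv S x" for x
    using assms(6)[rule_format, of 0 x] by (simp add: DERIV_deriv_iff_real_differentiable)
  have dS1: "DERIV (deriv S) x :> deriv (deriv S) x" for x
    using assms(6)[rule_format, of 1 x] by (simp add: DERIV_deriv_iff_real_differentiable)
  have cS: "continuous_on UNIV S"
    using dS by (intro continuous_at_imp_continuous_on) (auto intro: DERIV_isCont)
  have cS1: "continuous_on UNIV (deriv S)"
    using dS1 by (intro continuous_at_imp_continuous_on) (auto intro: DERIV_isCont)
  have Acont: "continuous_on (K \<times> K) (\<lambda>q. \<xi> (- \<tau> (fst q) (snd q)) (snd q))" if "\<xi> \<in> CX h K" for \<xi>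
  proof -
    have "continuous_on (K \<times> K) ((\<lambda>p. \<xi> (fst p) (snd p)) \<circ> (\<lambda>q. (- \<tau> (fst q) (snd q), snd q)))"
    proof (rule continuous_on_compose)
      show "continuous_on (K \<times> K) (\<lambda>q. (- \<tau> (fst q) (snd q), snd q))"
        by (intro continuous_on_Pair continuous_on_minus tc continuous_on_snd continuous_on_id)
      have "(\<lambda>q. (- \<tau> (fst q) (snd q), snd q)) ` (K \<times> K) \<subseteq> {-h..0} \<times> K"
        using trange by auto
      then show "continuous_on ((\<lambda>q. (- \<tau> (fst q) (snd q), snd q)) ` (K \<times> K)) (\<lambda>p. \<xi> (fst p) (snd p))"
        by (rule continuous_on_subset[OF CX_joint[OF that K]])
    qed
    then show ?thesis by (simp add: o_def)
  qed
  have hge: "0 \<le> h" using assms(10) tle tge unfolding K_def by (meson order_trans)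
  define \<mu> where "\<mu> = integral K (\<lambda>_. 1::real)"
  have mu: "0 \<le> \<mu>" unfolding \<mu>_def by (rule int_nonneg1[OF K])
  have nX: "\<bar>\<xi> (- \<tau> r r') r'\<bar> \<le> normX h K \<xi>" if "\<xi> \<in> CX h K" "r \<in> K" "r' \<in> K" for \<xi> r r'
    using that trange by (intro normX_ge[OF that(1) K Kne]) auto
  have nX0: "0 \<le> normX h K \<xi>" if "\<xi> \<in> CX h K" for \<xi>
    using nX[OF that] Kne by (meson abs_ge_zero all_not_in_conv order_trans)

  have part1: "nfG J S \<tau> K \<phi> \<in> CY K" if "\<phi> \<in> CX h K" for \<phi>
  proof -
    have "continuous_on K (\<lambda>r. integral K (\<lambda>r'. (\<lambda>q. J (fst q) (snd q) * S (\<phi> (- \<tau> (fst q) (snd q)) (snd q))) (r, r')))"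
      by (rule param_cont[OF K]) (intro continuous_on_mult jc continuous_on_compose2[OF cS Acont[OF that]]; simp)
    then show ?thesis by (simp add: CY_def nfG_def[abs_def])
  qed
  have part2: "frechet_deriv_XY h K (nfG J S \<tau> K) (nfDG J S \<tau> K \<phi>) \<phi>" if \<phi>: "\<phi> \<in> CX h K" for \<phi>
  proof -
    have Fc: "continuous_on (K \<times> K) (\<lambda>q. J (fst q) (snd q) * deriv S (\<phi> (- \<tau> (fst q) (snd q)) (snd q)) * \<psi> (- \<tau> (fst q) (snd q)) (snd q))"
      if "\<psi> \<in> CX h K" for \<psi>
      by (intro continuous_on_mult jc continuous_on_compose2[OF cS1 Acont[OF \<phi>]] Acont[OF that]; simp)
    have Lint: "(\<lambda>r'. J r r' * deriv S (\<phi> (- \<tau> r r') r') * \<psi> (- \<tau> r r') r') integrable_on K"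
      if "\<psi> \<in> CX h K" "r \<in> K" for \<psi> r
      using pint[OF K Fc[OF that(1)] that(2)] by simp
    have bl: "bounded_linear_XY h K (nfDG J S \<tau> K \<phi>)"
      unfolding bounded_linear_XY_def
    proof (intro conjI ballI allI)
      fix \<psi> assume \<psi>: "\<psi> \<in> CX h K"
      have "continuous_on K (\<lambda>r. integral K (\<lambda>r'. (\<lambda>q. J (fst q) (snd q) * deriv S (\<phi> (- \<tau> (fst q) (snd q)) (snd q)) * \<psi> (- \<tau> (fst q) (snd q)) (snd q)) (r, r')))"
        by (rule param_cont[OF K Fc[OF \<psi>]])
      then show "nfDG J S \<tau> K \<phi> \<psi> \<in> CY K" by (simp add: CY_def nfDG_def[abs_def])
    next
      fix \<psi>1 \<psi>2 c r assume h1: "\<psi>1 \<in> CX h K" and h2: "\<psi>2 \<in> CX h K" and r: "r \<in> K"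
      have "nfDG J S \<tau> K \<phi> (\<lambda>t x. c * \<psi>1 t x + \<psi>2 t x) r
        = integral K (\<lambda>r'. c * (J r r' * deriv S (\<phi> (- \<tau> r r') r') * \<psi>1 (- \<tau> r r') r') + J r r' * deriv S (\<phi> (- \<tau> r r') r') * \<psi>2 (- \<tau> r r') r')"
        unfolding nfDG_def by (rule integral_cong) (simp add: algebra_simps)
      also have "\<dots> = c * nfDG J S \<tau> K \<phi> \<psi>1 r + nfDG J S \<tau> K \<phi> \<psi>2 r"
        unfolding nfDG_def
        using integral_add[OF integrable_on_cmult_left[OF Lint[OF h1 r]] Lint[OF h2 r]]
        by (simp add: integral_mult_right)
      finally show "nfDG J S \<tau> K \<phi> (\<lambda>t x. c * \<psi>1 t x + \<psi>2 t x) r = c * nfDG J S \<tau> K \<phi> \<psi>1 r + nfDG J S \<tau> K \<phi> \<psi>2 r" .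
    next
      show "\<exists>C. \<forall>\<psi>\<in>CX h K. supn K (nfDG J S \<tau> K \<phi> \<psi>) \<le> C * normX h K \<psi>"
      proof (intro exI[of _ "MJ * M1 * \<mu>"] ballI)
        fix \<psi> assume \<psi>: "\<psi> \<in> CX h K"
        have "supn K (nfDG J S \<tau> K \<phi> \<psi>) \<le> MJ * M1 * normX h K \<psi> * integral K (\<lambda>_. 1)"
        proof (rule sup_le[OF Kne])
          fix r assume r: "r \<in> K"
          show "\<bar>nfDG J S \<tau> K \<phi> \<psi> r\<bar> \<le> MJ * M1 * normX h K \<psi> * integral K (\<lambda>_. 1)"
            unfolding nfDG_def
            by (rule int_bound[OF K Lint[OF \<psi> r]]) (intro abs3 Jb r S1b nX[OF \<psi> r]; assumption)
        qed
        then show "supn K (nfDG J S \<tau> K \<phi> \<psi>) \<le> MJ * M1 * \<mu> * normX h K \<psi>"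
          by (simp add: \<mu>_def algebra_simps)
      qed
    qed
    show ?thesis unfolding frechet_deriv_XY_def
    proof (intro conjI bl allI impI)
      fix e :: real assume e: "0 < e"
      define c where "c = MJ * M2 * \<mu>"
      have c0: "0 \<le> c" unfolding c_def using MJ M2 mu by simp
      define d where "d = e / (c + 1)"
      have d0: "0 < d" unfolding d_def using e c0 by simp
      show "\<exists>d>0. \<forall>\<psi>\<in>CX h K. 0 < normX h K \<psi> \<and> normX h K \<psi> < d \<longrightarrow>
        supn K (\<lambda>r. nfG J S \<tau> K (\<lambda>t x. \<phi> t x + \<psi> t x) r - nfG J S \<tau> K \<phi> r - nfDG J S \<tau> K \<phi> \<psi> r) \<le> e * normX h K \<psi>"
      proof (intro exI[of _ d] conjI d0 ballI impI)
        fix \<psi> assume \<psi>: "\<psi> \<in> CX h K" and N: "0 < normX h K \<psi> \<and> normX h K \<psi> < d"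
        define N where "N = normX h K \<psi>"
        have Np: "0 < N" "N < d" using N unfolding N_def by auto
        have c1: "continuous_on (K \<times> K) (\<lambda>q. J (fst q) (snd q) * S (\<phi> (- \<tau> (fst q) (snd q)) (snd q) + \<psi> (- \<tau> (fst q) (snd q)) (snd q)))"
          by (intro continuous_on_mult jc continuous_on_compose2[OF cS] continuous_on_add Acont \<phi> \<psi>; simp)
        have c2: "continuous_on (K \<times> K) (\<lambda>q. J (fst q) (snd q) * S (\<phi> (- \<tau> (fst q) (snd q)) (snd q)))"
          by (intro continuous_on_mult jc continuous_on_compose2[OF cS] Acont \<phi>; simp)
        have pt: "\<bar>nfG J S \<tau> K (\<lambda>t x. \<phi> t x + \<psi> t x) r - nfG J S \<tau> K \<phi> r - nfDG J S \<tau> K \<phi> \<psi> r\<bar> \<le> MJ * (M2 * N^2) * integral K (\<lambda>_. 1)"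
          if r: "r \<in> K" for r
        proof -
          have i1: "(\<lambda>r'. J r r' * S (\<phi> (- \<tau> r r') r' + \<psi> (- \<tau> r r') r')) integrable_on K"
            using pint[OF K c1 r] by simp
          have i2: "(\<lambda>r'. J r r' * S (\<phi> (- \<tau> r r') r')) integrable_on K"
            using pint[OF K c2 r] by simp
          have "nfG J S \<tau> K (\<lambda>t x. \<phi> t x + \<psi> t x) r - nfG J S \<tau> K \<phi> r - nfDG J S \<tau> K \<phi> \<psi> r
             = integral K (\<lambda>r'. J r r' * S (\<phi> (- \<tau> r r') r' + \<psi> (- \<tau> r r') r') - J r r' * S (\<phi> (- \<tau> r r') r')
                 - J r r' * deriv S (\<phi> (- \<tau> r r') r') * \<psi> (- \<tau> r r') r')"
            unfolding nfG_def nfDG_def using i1 i2 Lint[OF \<psi> r]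
            by (simp add: integral_diff integrable_diff)
          also have "\<dots> = integral K (\<lambda>r'. J r r' * (S (\<phi> (- \<tau> r r') r' + \<psi> (- \<tau> r r') r') - S (\<phi> (- \<tau> r r') r')
                 - deriv S (\<phi> (- \<tau> r r') r') * \<psi> (- \<tau> r r') r'))"
            by (rule integral_cong) (simp add: algebra_simps)
          finally have eq: "nfG J S \<tau> K (\<lambda>t x. \<phi> t x + \<psi> t x) r - nfG J S \<tau> K \<phi> r - nfDG J S \<tau> K \<phi> \<psi> r
             = integral K (\<lambda>r'. J r r' * (S (\<phi> (- \<tau> r r') r' + \<psi> (- \<tau> r r') r') - S (\<phi> (- \<tau> r r') r')
                 - deriv S (\<phi> (- \<tau> r r') r') * \<psi> (- \<tau> r r') r'))" .
          have i3: "(\<lambda>r'. J r r' * (S (\<phi> (- \<tau> r r') r' + \<psi> (- \<tau> r r') r') - S (\<phi> (- \<tau> r r') r')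
                 - deriv S (\<phi> (- \<tau> r r') r') * \<psi> (- \<tau> r r') r')) integrable_on K"
            using integrable_diff[OF integrable_diff[OF i1 i2] Lint[OF \<psi> r]] by (simp add: algebra_simps)
          show ?thesis unfolding eq
          proof (rule int_bound[OF K i3])
            fix r' assume r': "r' \<in> K"
            have t: "\<bar>S (\<phi> (- \<tau> r r') r' + \<psi> (- \<tau> r r') r') - S (\<phi> (- \<tau> r r') r')
                 - deriv S (\<phi> (- \<tau> r r') r') * \<psi> (- \<tau> r r') r'\<bar> \<le> M2 * (\<psi> (- \<tau> r r') r')^2"
              by (rule taylor2[OF dS dS1 S2b])
            have "\<bar>\<psi> (- \<tau> r r') r'\<bar> \<le> \<bar>N\<bar>" using nX[OF \<psi> r r'] Np unfolding N_def by simp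
            then have "(\<psi> (- \<tau> r r') r')^2 \<le> N^2" by (simp add: abs_le_square_iff)
            then have "M2 * (\<psi> (- \<tau> r r') r')^2 \<le> M2 * N^2" using M2 by (simp add: mult_left_mono)
            with t have "\<bar>S (\<phi> (- \<tau> r r') r' + \<psi> (- \<tau> r r') r') - S (\<phi> (- \<tau> r r') r')
                 - deriv S (\<phi> (- \<tau> r r') r') * \<psi> (- \<tau> r r') r'\<bar> \<le> M2 * N^2" by linarith
            then show "\<bar>J r r' * (S (\<phi> (- \<tau> r r') r' + \<psi> (- \<tau> r r') r') - S (\<phi> (- \<tau> r r') r')
                 - deriv S (\<phi> (- \<tau> r r') r') * \<psi> (- \<tau> r r') r')\<bar> \<le> MJ * (M2 * N^2)"
              unfolding abs_mult using Jb[OF r r'] MJ by (intro mult_mono) auto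
          qed
        qed
        have "supn K (\<lambda>r. nfG J S \<tau> K (\<lambda>t x. \<phi> t x + \<psi> t x) r - nfG J S \<tau> K \<phi> r - nfDG J S \<tau> K \<phi> \<psi> r) \<le> c * N * N"
          using pt by (intro sup_le[OF Kne]) (simp add: c_def \<mu>_def power2_eq_square algebra_simps)
        also have "c * N * N \<le> (c + 1) * d * N"
          using Np c0 by (intro mult_right_mono mult_mono) auto
        also have "(c + 1) * d = e" unfolding d_def using c0 by simp
        finally show "supn K (\<lambda>r. nfG J S \<tau> K (\<lambda>t x. \<phi> t x + \<psi> t x) r - nfG J S \<tau> K \<phi> r - nfDG J S \<tau> K \<phi> \<psi> r) \<le> e * normX h K \<psi>"
          unfolding N_def .
      qed
    qed
  qed
  show ?thesis using part1 part2 unfolding K_def by blast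
qed

end
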